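(* Let $\Gamma$ be a two-stack automaton and let $\gamma=\gamma_1\cdots\gamma_n$ be a path in $\Gamma$. Then $\gamma$ is balanced if and only if there exists an involution $\pi_\gamma\in S_n$ such that: (1) $\rho(\gamma_i)=\varepsilon$ for all $i$ with $\pi_\gamma(i)=i$; (2) $\rho(\gamma_i)\in X\cup Y$ and $\rho(\gamma_{\pi_\gamma(i)})=\rho(\gamma_i)^{-1}$ for all $i$ with $\pi_\gamma(i)>i$; (3) there are no $i,j$ with $\rho(\gamma_i)\sim\rho(\gamma_j)$ and $i<j<\pi_\gamma(i)<\pi_\gamma(j)$. Moreover, for each balanced $\gamma$ such an involution $\pi_\gamma$ is unique.
   Context: Let $X=\{x_i: i\in\mathbb Z\}$, $X^{-1}=\{x_i^{-1}: i\in\mathbb Z\}$, and similarly $Y=\{y_i\}$, $Y^{-1}=\{y_i^{-1}\}$ be formal labels, and $\varepsilon$ a further label. Write $w_1\sim w_2$ if $w_1,w_2\in X\cup X^{-1}$ or $w_1,w_2\in Y\cup Y^{-1}$. A two-stack automaton is a finite directed graph $\Gamma$ with vertices $v_1,\dots,v_m$, each vertex $v$ labelled by $\rho(v)\in X\cup X^{-1}\cup Y\cup Y^{-1}\cup\{\varepsilon\}$, such that $\rho(v_1)=\rho(v_2)=\varepsilon$ and there is no edge $v_i\to v_j$ with $\rho(v_i)\sim\rho(v_j)$. A path $\gamma=\gamma_1\cdots\gamma_n$ is a sequence of vertices with $\gamma_t\to\gamma_{t+1}$ edges; its length is $n$ (the number of vertices). Traversing $\gamma$, keep two words $w_X\in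 X^*$, $w_Y\in Y^*$, initially empty; on entering a vertex with label $x_i$ append $x_i$ to $w_X$, with label $x_i^{-1}$ remove $x_i$ from the end of $w_X$ (similarly for $y_i$, $y_i^{-1}$ and $w_Y$), and with label $\varepsilon$ do nothing. The path is balanced if every step of this process is well defined (each removal removes the indicated letter from the end of the corresponding word) and both words are empty at the end. *)

theory Defs
  imports Main "HOL-Combinatorics.Permutations"
begin

datatype label = X int | Xinv int | Y int | Yinv int | Eps

definition similar :: "label \<Rightarrow> label \<Rightarrow> bool" (infix "\<sim>\<^sub>l" 50) where
  "a \<sim>\<^sub>l b \<longleftrightarrow>
     ((\<exists>i. a = X i \<or> a = Xinv i) \<and> (\<exists>j. b = X j \<or> b = Xinv j)) \<or>
     ((\<exists>i. a = Y i \<or> a = Yinv i) \<and> (\<exists>j. b = Y j \<or> b = Yinv j))"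

fun is_pos :: "label \<Rightarrow> bool" where
  "is_pos (X _) = True" | "is_pos (Y _) = True" | "is_pos _ = False"

fun linv :: "label \<Rightarrow> label" where
  "linv (X i) = Xinv i" | "linv (Xinv i) = X i" |
  "linv (Y i) = Yinv i" | "linv (Yinv i) = Y i" | "linv Eps = Eps"

definition two_stack_automaton ::
  "'v set \<Rightarrow> ('v \<times> 'v) set \<Rightarrow> ('v \<Rightarrow> label) \<Rightarrow> 'v \<Rightarrow> 'v \<Rightarrow> bool" where
  "two_stack_automaton V E rho v1 v2 \<longleftrightarrow>
     finite V \<and> E \<subseteq> V \<times> V \<and> v1 \<in> V \<and> v2 \<in> V \<and> v1 \<noteq> v2 \<and>
     rho v1 = Eps \<and> rho v2 = Eps \<and>
     (\<forall>(a, b) \<in> E. \<not> (rho a \<sim>\<^sub>l rho b))"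

definition is_path :: "'v set \<Rightarrow> ('v \<times> 'v) set \<Rightarrow> 'v list \<Rightarrow> bool" where
  "is_path V E \<gamma> \<longleftrightarrow> set \<gamma> \<subseteq> V \<and> (\<forall>t. Suc t < length \<gamma> \<longrightarrow> (\<gamma> ! t, \<gamma> ! Suc t) \<in> E)"

text \<open>Stack words are lists of indices; the last element of the list is the end of the word.
  None means that an ill-defined removal occurred.\<close>
fun stack_step :: "(int list \<times> int list) option \<Rightarrow> label \<Rightarrow> (int list \<times> int list) option" where
  "stack_step None _ = None"
| "stack_step (Some (wx, wy)) (X i) = Some (wx @ [i], wy)"
| "stack_step (Some (wx, wy)) (Y i) = Some (wx, wy @ [i])"
| "stack_step (Some (wx, wy)) (Xinv i) =
     (if wx \<noteq> [] \<and> last wx = i then Some (butlast wx, wy) else None)"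
| "stack_step (Some (wx, wy)) (Yinv i) =
     (if wy \<noteq> [] \<and> last wy = i then Some (wx, butlast wy) else None)"
| "stack_step (Some s) Eps = Some s"

definition balanced :: "('v \<Rightarrow> label) \<Rightarrow> 'v list \<Rightarrow> bool" where
  "balanced rho \<gamma> \<longleftrightarrow> foldl stack_step (Some ([], [])) (map rho \<gamma>) = Some ([], [])"

text \<open>Positions are 0-based: position i of the path is \<gamma> ! i, i < length \<gamma>.\<close>
definition good_involution :: "('v \<Rightarrow> label) \<Rightarrow> 'v list \<Rightarrow> (nat \<Rightarrow> nat) \<Rightarrow> bool" where
  "good_involution rho \<gamma> p \<longleftrightarrow>
     (let n = length \<gamma> in
       p permutes {..<n} \<and> (\<forall>i<n. p (p i) = i) \<and>
       (\<forall>i<n. p i = i \<longrightarrow> rho (\<gamma> ! i) = Eps) \<and>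
       (\<forall>i<n. p i > i \<longrightarrow> is_pos (rho (\<gamma> ! i)) \<and> rho (\<gamma> ! p i) = linv (rho (\<gamma> ! i))) \<and>
       \<not> (\<exists>i j. i < n \<and> j < n \<and> rho (\<gamma> ! i) \<sim>\<^sub>l rho (\<gamma> ! j) \<and>
                i < j \<and> j < p i \<and> p i < p j))"

end

theory Submission
  imports Defs
begin

fun cls :: "label \<Rightarrow> nat" where
  "cls (X _) = 1" | "cls (Xinv _) = 1" | "cls (Y _) = 2" | "cls (Yinv _) = 2" | "cls Eps = 0"

fun idx :: "label \<Rightarrow> int" where
  "idx (X i) = i" | "idx (Xinv i) = i" | "idx (Y i) = i" | "idx (Yinv i) = i" | "idx Eps = 0"

lemma similar_cls: "a \<sim>\<^sub>l b \<longleftrightarrow> cls a = cls b \<and> cls a \<noteq> 0"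
  by (cases a; cases b; auto simp: similar_def)

lemma cls0: "cls a = 0 \<longleftrightarrow> a = Eps" by (cases a) auto
lemma cls_range: "cls a \<noteq> 0 \<Longrightarrow> cls a = 1 \<or> cls a = 2" by (cases a) auto
lemma cls_linv[simp]: "cls (linv a) = cls a" by (cases a) auto
lemma idx_linv[simp]: "idx (linv a) = idx a" by (cases a) auto
lemma pos_linv: "cls a \<noteq> 0 \<Longrightarrow> is_pos (linv a) \<longleftrightarrow> \<not> is_pos a" by (cases a) auto
lemma linv_linv[simp]: "linv (linv a) = a" by (cases a) auto
lemma linv_Eps: "linv a = Eps \<longleftrightarrow> a = Eps" by (cases a) auto
lemma Eps_linv: "Eps = linv a \<longleftrightarrow> a = Eps" by (cases a) auto
lemma eq_by_parts: "cls a = cls b \<Longrightarrow> cls a \<noteq> 0 \<Longrightarrow> idx a = idx b \<Longrightarrow> is_pos a = is_pos b \<Longrightarrow> a = b"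
  by (cases a; cases b; auto)
lemma pos_cls: "is_pos a \<Longrightarrow> cls a \<noteq> 0" by (cases a) auto

lemma step_gen:
  "stack_step (Some (g 1, g 2)) l =
   (if cls l = 0 then Some (g 1, g 2)
    else if is_pos l then Some ((g(cls l := g (cls l) @ [idx l])) 1, (g(cls l := g (cls l) @ [idx l])) 2)
    else if g (cls l) \<noteq> [] \<and> last (g (cls l)) = idx l
      then Some ((g(cls l := butlast (g (cls l)))) 1, (g(cls l := butlast (g (cls l)))) 2)
    else None)"
  by (cases l) auto

lemma inv_permutes:
  assumes "\<And>x. x \<notin> S \<Longrightarrow> p x = x" "\<And>x. x \<in> S \<Longrightarrow> p x \<in> S \<and> p (p x) = x"
  shows "p permutes S"
  unfolding permutes_def
proof (intro conjI allI impI)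
  fix x assume "x \<notin> S" then show "p x = x" using assms by blast
next
  fix y
  show "\<exists>!x. p x = y"
  proof (cases "y \<in> S")
    case True
    then show ?thesis using assms by (metis)
  next
    case False
    then show ?thesis using assms by (metis)
  qed
qed

definition G :: "label list \<Rightarrow> (nat \<Rightarrow> nat) \<Rightarrow> bool" where
  "G ls p \<longleftrightarrow> (let n = length ls in
       p permutes {..<n} \<and> (\<forall>i<n. p (p i) = i) \<and>
       (\<forall>i<n. p i = i \<longrightarrow> ls ! i = Eps) \<and>
       (\<forall>i<n. p i > i \<longrightarrow> is_pos (ls ! i) \<and> ls ! p i = linv (ls ! i)) \<and>
       \<not> (\<exists>i j. i < n \<and> j < n \<and> ls ! i \<sim>\<^sub>l ls ! j \<and>
                i < j \<and> j < p i \<and> p i < p j))"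

lemma good_G: "good_involution rho \<gamma> p \<longleftrightarrow> G (map rho \<gamma>) p"
proof (cases "p permutes {..<length \<gamma>}")
  case True
  then have lt: "\<And>i. i < length \<gamma> \<Longrightarrow> p i < length \<gamma>" using permutes_in_image by fastforce
  show ?thesis unfolding good_involution_def G_def Let_def using lt True by auto
next
  case False
  then show ?thesis unfolding good_involution_def G_def Let_def by auto
qed

lemma G_tri:
  assumes "G ls p" "t < length ls"
  shows "(p t = t \<and> ls!t = Eps) \<or> (t < p t \<and> is_pos (ls!t) \<and> ls!(p t) = linv (ls!t))
       \<or> (p t < t \<and> is_pos (ls!(p t)) \<and> ls!t = linv (ls!(p t)))"
proof -
  have perm: "p permutes {..<length ls}" and inv: "\<forall>i<length ls. p (p i) = i"
    and fx: "\<forall>i<length ls. p i = i \<longrightarrow> ls ! i = Eps"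
    and up: "\<forall>i<length ls. p i > i \<longrightarrow> is_pos (ls ! i) \<and> ls ! p i = linv (ls ! i)"
    using assms(1) unfolding G_def Let_def by auto
  have lt: "p t < length ls" using permutes_in_image[OF perm] assms(2) by auto
  consider "p t = t" | "t < p t" | "p t < t" by linarith
  then show ?thesis
  proof cases
    case 3
    have h: "p (p t) = t" using inv assms(2) by auto
    have "is_pos (ls!(p t)) \<and> ls!(p (p t)) = linv (ls!(p t))" using up[rule_format, OF lt] 3 h by auto
    then show ?thesis using 3 h by auto
  qed (use fx up assms(2) in auto)
qed

lemma G_lt: "G ls p \<Longrightarrow> t < length ls \<Longrightarrow> p t < length ls"
  unfolding G_def Let_def using permutes_in_image by fastforce

lemma G_inv: "G ls p \<Longrightarrow> t < length ls \<Longrightarrow> p (p t) = t"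
  unfolding G_def Let_def by auto

lemma G_out: "G ls p \<Longrightarrow> length ls \<le> t \<Longrightarrow> p t = t"
  unfolding G_def Let_def using permutes_not_in by fastforce

lemma G_cross: "G ls p \<Longrightarrow> i < length ls \<Longrightarrow> j < length ls \<Longrightarrow> cls (ls!i) = cls (ls!j) \<Longrightarrow>
   cls (ls!i) \<noteq> 0 \<Longrightarrow> i < j \<Longrightarrow> j < p i \<Longrightarrow> p i < p j \<Longrightarrow> False"
  unfolding G_def Let_def similar_cls by blast

definition U :: "label list \<Rightarrow> (nat \<Rightarrow> nat) \<Rightarrow> nat \<Rightarrow> nat \<Rightarrow> nat list" where
  "U ls p c t = filter (\<lambda>s. cls (ls!s) = c \<and> t \<le> p s) [0..<t]"

fun R :: "label list \<Rightarrow> nat \<Rightarrow> nat \<Rightarrow> nat list" where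
  "R ls c 0 = []"
| "R ls c (Suc t) = (if cls (ls!t) = c then (if is_pos (ls!t) then R ls c t @ [t] else butlast (R ls c t)) else R ls c t)"

lemma filter_last_split:
  assumes "P s0" "s0 < t" "\<And>s. s < t \<Longrightarrow> P s \<Longrightarrow> s \<le> s0"
  shows "filter P [0..<t] = filter (\<lambda>s. P s \<and> s \<noteq> s0) [0..<t] @ [s0]"
proof -
  have e1: "[0..<t] = [0..<s0] @ [s0..<t]"
    using upt_add_eq_append[of 0 s0 "t - s0"] assms(2) by simp
  have e2: "[s0..<t] = s0 # [Suc s0..<t]" by (rule upt_conv_Cons) (use assms(2) in auto)
  have e: "[0..<t] = [0..<s0] @ s0 # [Suc s0..<t]" using e1 e2 by simp
  have a: "filter P [Suc s0..<t] = []" unfolding filter_empty_conv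
    using assms(3) by (metis atLeastLessThan_iff not_less_eq_eq set_upt)
  have b: "filter (\<lambda>s. P s \<and> s \<noteq> s0) [Suc s0..<t] = []" unfolding filter_empty_conv
    using assms(3) by (metis atLeastLessThan_iff not_less_eq_eq set_upt)
  have c: "filter (\<lambda>s. P s \<and> s \<noteq> s0) [0..<s0] = filter P [0..<s0]" by (rule filter_cong) auto
  show ?thesis unfolding e using a b c assms(1) by simp
qed

lemma U_step:
  assumes G: "G ls p" and t: "t < length ls" and c: "c \<noteq> 0"
  shows "U ls p c (Suc t) = (if cls (ls!t) = c then (if is_pos (ls!t) then U ls p c t @ [t] else butlast (U ls p c t)) else U ls p c t)
    \<and> (cls (ls!t) = c \<and> \<not> is_pos (ls!t) \<longrightarrow> U ls p c t \<noteq> [] \<and> p t = last (U ls p c t))"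
proof -
  define P where "P = (\<lambda>s. cls (ls!s) = c \<and> t \<le> p s)"
  have ptl: "p t < length ls" using G_lt[OF G t] .
  have key: "\<And>s. s < t \<Longrightarrow> (Suc t \<le> p s) \<longleftrightarrow> (t \<le> p s \<and> s \<noteq> p t)"
  proof -
    fix s assume s: "s < t"
    have "p s = t \<longleftrightarrow> s = p t" using G_inv[OF G] s t by (metis order.strict_trans)
    then show "(Suc t \<le> p s) \<longleftrightarrow> (t \<le> p s \<and> s \<noteq> p t)" by auto
  qed
  have Us: "U ls p c (Suc t) = filter (\<lambda>s. P s \<and> s \<noteq> p t) [0..<t] @ (if cls (ls!t) = c \<and> Suc t \<le> p t then [t] else [])"
  proof -
    have "filter (\<lambda>s. cls (ls!s) = c \<and> Suc t \<le> p s) [0..<t] = filter (\<lambda>s. P s \<and> s \<noteq> p t) [0..<t]"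
      by (rule filter_cong) (auto simp: P_def key)
    then show ?thesis unfolding U_def by simp
  qed
  have Ut: "U ls p c t = filter P [0..<t]" unfolding U_def P_def by simp
  show ?thesis
  proof (cases "cls (ls!t) = c")
    case False
    have "filter (\<lambda>s. P s \<and> s \<noteq> p t) [0..<t] = filter P [0..<t]"
    proof (rule filter_cong)
      fix s assume "s \<in> set [0..<t]"
      show "(P s \<and> s \<noteq> p t) = P s"
        using G_tri[OF G t] False by (auto simp: P_def)
    qed simp
    then show ?thesis using Us Ut False by simp
  next
    case True
    show ?thesis
    proof (cases "is_pos (ls!t)")
      case pos: True
      have gt: "t < p t" using G_tri[OF G t] pos True c pos_linv[of "ls ! p t"]
        by (metis cls0 linv.simps(5) linv_linv)
      have "filter (\<lambda>s. P s \<and> s \<noteq> p t) [0..<t] = filter P [0..<t]"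
        by (rule filter_cong) (use gt in auto)
      then show ?thesis using Us Ut True pos gt by simp
    next
      case neg: False
      have tri: "p t < t \<and> is_pos (ls!(p t)) \<and> ls!t = linv (ls!(p t))"
        using G_tri[OF G t] neg True c cls0 pos_linv by metis
      define s0 where "s0 = p t"
      have Ps0: "P s0" using tri True G_inv[OF G t] by (auto simp: P_def s0_def)
      have le: "s \<le> s0" if "s < t" "P s" for s
      proof (rule ccontr)
        assume "\<not> s \<le> s0"
        then have "s0 < s" by simp
        moreover have "p s \<noteq> t" using that G_inv[OF G] t s0_def \<open>s0 < s\<close> by (metis less_trans nat_neq_iff)
        moreover have "p s0 = t" using G_inv[OF G t] s0_def by simp
        ultimately show False
          using G_cross[OF G, of s0 s] that tri t c True
          by (auto simp: P_def s0_def)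
      qed
      have split: "filter P [0..<t] = filter (\<lambda>s. P s \<and> s \<noteq> s0) [0..<t] @ [s0]"
        by (rule filter_last_split[where P=P, OF Ps0]) (use tri le s0_def in auto)
      have "\<not> Suc t \<le> p t" using tri by simp
      then show ?thesis using Us Ut split True neg s0_def by simp
    qed
  qed
qed

lemma U_R: "G ls p \<Longrightarrow> c \<noteq> 0 \<Longrightarrow> t \<le> length ls \<Longrightarrow> U ls p c t = R ls c t"
proof (induction t)
  case 0 then show ?case by (simp add: U_def)
next
  case (Suc t)
  then show ?case using U_step[of ls p t c] by simp
qed

lemma U_end: "G ls p \<Longrightarrow> U ls p c (length ls) = []"
  unfolding U_def using G_lt by (fastforce simp: filter_empty_conv)

lemma G_close: "G ls p \<Longrightarrow> t < length ls \<Longrightarrow> cls (ls!t) \<noteq> 0 \<Longrightarrow> \<not> is_pos (ls!t) \<Longrightarrow>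
   R ls (cls (ls!t)) t \<noteq> [] \<and> p t = last (R ls (cls (ls!t)) t)"
  using U_step[of ls p t "cls (ls!t)"] U_R[of ls p "cls (ls!t)" t] by simp


lemma G_prefix:
  assumes G: "G ls p"
  shows "t \<le> length ls \<Longrightarrow> foldl stack_step (Some ([],[])) (take t ls)
     = Some (map (\<lambda>s. idx (ls!s)) (R ls 1 t), map (\<lambda>s. idx (ls!s)) (R ls 2 t))"
proof (induction t)
  case 0 then show ?case by simp
next
  case (Suc t)
  define g where "g = (\<lambda>c. map (\<lambda>s. idx (ls!s)) (R ls c t))"
  have t: "t < length ls" using Suc by simp
  have IH: "foldl stack_step (Some ([],[])) (take t ls) = Some (g 1, g 2)"
    using Suc by (simp add: g_def)
  have e: "foldl stack_step (Some ([],[])) (take (Suc t) ls) = stack_step (Some (g 1, g 2)) (ls!t)"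
    using t IH by (simp add: take_Suc_conv_app_nth)
  show ?case
  proof (cases "cls (ls!t) = 0")
    case True then show ?thesis unfolding e step_gen by (simp add: g_def)
  next
    case nz: False
    show ?thesis
    proof (cases "is_pos (ls!t)")
      case True then show ?thesis unfolding e step_gen using nz cls_range[OF nz]
        by (auto simp: g_def)
    next
      case False
      have cl: "R ls (cls (ls!t)) t \<noteq> [] \<and> p t = last (R ls (cls (ls!t)) t)"
        using G_close[OF G t nz False] .
      have tri: "ls!t = linv (ls!(p t))" using G_tri[OF G t] nz False cls0 by auto
      have "g (cls (ls!t)) \<noteq> [] \<and> last (g (cls (ls!t))) = idx (ls!t)"
        using cl tri by (simp add: g_def last_map)
      then show ?thesis unfolding e step_gen using nz False cls_range[OF nz]
        by (auto simp: g_def map_butlast)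
    qed
  qed
qed

lemma G_balanced: "G ls p \<Longrightarrow> foldl stack_step (Some ([],[])) ls = Some ([],[])"
  using G_prefix[of ls p "length ls"] U_R[of ls p 1 "length ls"] U_R[of ls p 2 "length ls"]
    U_end[of ls p] by simp

lemma G_unique: assumes "G ls p" "G ls q" shows "p = q"
proof
  fix x
  show "p x = q x"
  proof (cases "x < length ls")
    case False then show ?thesis using G_out assms by (metis not_less)
  next
    case x: True
    show ?thesis
    proof (cases "cls (ls!x) = 0")
      case True then show ?thesis using G_tri[OF assms(1) x] G_tri[OF assms(2) x] cls0 linv_Eps Eps_linv
        by (metis is_pos.simps(5))
    next
      case nz: False
      show ?thesis
      proof (cases "is_pos (ls!x)")
        case False then show ?thesis using G_close[OF assms(1) x nz] G_close[OF assms(2) x nz] by simp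
      next
        case True
        define u where "u = p x"
        have tri: "x < u \<and> ls!u = linv (ls!x)" using G_tri[OF assms(1) x] True nz cls0 pos_linv u_def
          by (metis linv_linv)
        have u: "u < length ls" using G_lt[OF assms(1) x] u_def by simp
        have unz: "cls (ls!u) \<noteq> 0" and unp: "\<not> is_pos (ls!u)" using tri nz True pos_linv by auto
        have "q u = p u" using G_close[OF assms(1) u unz unp] G_close[OF assms(2) u unz unp] by simp
        also have "p u = x" using G_inv[OF assms(1) x] u_def by simp
        finally have "q (q u) = q x" by simp
        then show ?thesis using G_inv[OF assms(2) u] u_def by simp
      qed
    qed
  qed
qed


definition FF :: "label list \<Rightarrow> (nat \<Rightarrow> nat) \<Rightarrow> nat \<Rightarrow> int list" where
  "FF ls p c = map (\<lambda>s. idx (ls!s)) (filter (\<lambda>s. cls (ls!s) = c \<and> p s = s) [0..<length ls])"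

definition Inv0 :: "label list \<Rightarrow> (nat \<Rightarrow> nat) \<Rightarrow> bool" where
  "Inv0 ls p \<longleftrightarrow>
    (\<forall>i. length ls \<le> i \<longrightarrow> p i = i) \<and>
    (\<forall>i<length ls. p i < length ls \<and> p (p i) = i) \<and>
    (\<forall>i<length ls. p i = i \<longrightarrow> (ls!i = Eps \<or> is_pos (ls!i))) \<and>
    (\<forall>i<length ls. i < p i \<longrightarrow> is_pos (ls!i) \<and> ls!(p i) = linv (ls!i)) \<and>
    (\<forall>i j. i < length ls \<longrightarrow> j < length ls \<longrightarrow> cls (ls!i) = cls (ls!j) \<longrightarrow> cls (ls!i) \<noteq> 0 \<longrightarrow>
        i < j \<longrightarrow> j < p i \<longrightarrow> \<not> p i < p j) \<and>
    (\<forall>i s. i < length ls \<longrightarrow> s < length ls \<longrightarrow> cls (ls!i) = cls (ls!s) \<longrightarrow> cls (ls!i) \<noteq> 0 \<longrightarrow>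
        i < s \<longrightarrow> s < p i \<longrightarrow> p s \<noteq> s)"

lemma FF_snoc:
  assumes "\<forall>i. length ls \<le> i \<longrightarrow> p i = i"
  shows "FF (ls @ [l]) p c = FF ls p c @ (if cls l = c then [idx l] else [])"
proof -
  let ?n = "length ls"
  have f: "filter (\<lambda>s. cls ((ls@[l])!s) = c \<and> p s = s) [0..<?n] = filter (\<lambda>s. cls (ls!s) = c \<and> p s = s) [0..<?n]"
    by (rule filter_cong) (auto simp: nth_append)
  have m: "map (\<lambda>s. idx ((ls@[l])!s)) (filter (\<lambda>s. cls (ls!s) = c \<and> p s = s) [0..<?n])
     = map (\<lambda>s. idx (ls!s)) (filter (\<lambda>s. cls (ls!s) = c \<and> p s = s) [0..<?n])"
    by (rule map_cong) (auto simp: nth_append)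
  show ?thesis unfolding FF_def using f m assms by simp
qed

lemma Inv0_snoc_open:
  assumes I: "Inv0 ls p" and l: "cls l = 0 \<or> is_pos l"
  shows "Inv0 (ls @ [l]) p"
proof -
  let ?n = "length ls"
  note D = I[unfolded Inv0_def]
  have out: "\<forall>i. ?n \<le> i \<longrightarrow> p i = i" using D by blast
  have rng: "\<forall>i<?n. p i < ?n \<and> p (p i) = i" using D by blast
  have fx: "\<forall>i<?n. p i = i \<longrightarrow> (ls!i = Eps \<or> is_pos (ls!i))" using D by blast
  have up: "\<forall>i<?n. i < p i \<longrightarrow> is_pos (ls!i) \<and> ls!(p i) = linv (ls!i)" using D by blast
  have cr: "\<forall>i j. i < ?n \<longrightarrow> j < ?n \<longrightarrow> cls (ls!i) = cls (ls!j) \<longrightarrow> cls (ls!i) \<noteq> 0 \<longrightarrow>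
        i < j \<longrightarrow> j < p i \<longrightarrow> \<not> p i < p j" using D by blast
  have ns: "\<forall>i s. i < ?n \<longrightarrow> s < ?n \<longrightarrow> cls (ls!i) = cls (ls!s) \<longrightarrow> cls (ls!i) \<noteq> 0 \<longrightarrow>
        i < s \<longrightarrow> s < p i \<longrightarrow> p s \<noteq> s" using D by blast
  have pn: "p ?n = ?n" using out by simp
  show ?thesis unfolding Inv0_def length_append_singleton
  proof (intro conjI allI impI)
    fix i assume "Suc ?n \<le> i" then show "p i = i" using out by simp
  next
    fix i assume "i < Suc ?n" then show "p i < Suc ?n" using rng pn less_Suc_eq by auto
  next
    fix i assume "i < Suc ?n" then show "p (p i) = i" using rng pn less_Suc_eq by auto
  next
    fix i assume "i < Suc ?n" "p i = i"
    then show "(ls@[l])!i = Eps \<or> is_pos ((ls@[l])!i)" using fx l cls0 less_Suc_eq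
      by (auto simp: nth_append)
  next
    fix i assume i: "i < Suc ?n" "i < p i"
    then have "i < ?n" using pn less_Suc_eq by auto
    then show "is_pos ((ls@[l])!i)" "(ls@[l])!(p i) = linv ((ls@[l])!i)"
      using up rng i by (auto simp: nth_append)
  next
    fix i j assume a: "i < Suc ?n" "j < Suc ?n" "cls ((ls@[l])!i) = cls ((ls@[l])!j)"
      "cls ((ls@[l])!i) \<noteq> 0" "i < j" "j < p i"
    have "i < ?n" using a by simp
    then have "j < ?n" using a rng by (metis less_Suc_eq order.strict_trans)
    then show "\<not> p i < p j" using a cr \<open>i < ?n\<close> by (auto simp: nth_append)
  next
    fix i s assume a: "i < Suc ?n" "s < Suc ?n" "cls ((ls@[l])!i) = cls ((ls@[l])!s)"
      "cls ((ls@[l])!i) \<noteq> 0" "i < s" "s < p i"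
    have "i < ?n" using a by simp
    then have "s < ?n" using a rng by (metis less_Suc_eq order.strict_trans)
    have "cls (ls!i) = cls (ls!s)" "cls (ls!i) \<noteq> 0" using a \<open>i < ?n\<close> \<open>s < ?n\<close> by (auto simp: nth_append)
    then show "p s \<noteq> s" using ns \<open>i < ?n\<close> \<open>s < ?n\<close> a(5,6) by blast
  qed
qed

lemma sorted_le_last: "sorted xs \<Longrightarrow> x \<in> set xs \<Longrightarrow> x \<le> last xs"
  by (induction xs) (auto simp: last_in_set)

lemma Inv0_snoc_close:
  assumes I: "Inv0 ls p" and l: "cls l \<noteq> 0" "\<not> is_pos l"
    and ne: "FF ls p (cls l) \<noteq> []" and lst: "last (FF ls p (cls l)) = idx l"
  shows "\<exists>p'. Inv0 (ls @ [l]) p' \<and> (\<forall>c. FF (ls@[l]) p' c = (if c = cls l then butlast (FF ls p c) else FF ls p c))"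
proof -
  let ?n = "length ls"
  note D = I[unfolded Inv0_def]
  have out: "\<forall>i. ?n \<le> i \<longrightarrow> p i = i" using D by blast
  have rng: "\<forall>i<?n. p i < ?n \<and> p (p i) = i" using D by blast
  have fx: "\<forall>i<?n. p i = i \<longrightarrow> (ls!i = Eps \<or> is_pos (ls!i))" using D by blast
  have up: "\<forall>i<?n. i < p i \<longrightarrow> is_pos (ls!i) \<and> ls!(p i) = linv (ls!i)" using D by blast
  have cr: "\<forall>i j. i < ?n \<longrightarrow> j < ?n \<longrightarrow> cls (ls!i) = cls (ls!j) \<longrightarrow> cls (ls!i) \<noteq> 0 \<longrightarrow>
        i < j \<longrightarrow> j < p i \<longrightarrow> \<not> p i < p j" using D by blast
  have ns: "\<forall>i s. i < ?n \<longrightarrow> s < ?n \<longrightarrow> cls (ls!i) = cls (ls!s) \<longrightarrow> cls (ls!i) \<noteq> 0 \<longrightarrow>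
        i < s \<longrightarrow> s < p i \<longrightarrow> p s \<noteq> s" using D by blast
  have pn: "p ?n = ?n" using out by simp
  define L where "L = filter (\<lambda>s. cls (ls!s) = cls l \<and> p s = s) [0..<?n]"
  have FFL: "FF ls p (cls l) = map (\<lambda>s. idx (ls!s)) L" unfolding FF_def L_def by simp
  have Lne: "L \<noteq> []" using ne FFL by auto
  define s where "s = last L"
  have sL: "s \<in> set L" using Lne s_def by simp
  have sn: "s < ?n" and scl: "cls (ls!s) = cls l" and ps: "p s = s" using sL by (auto simp: L_def)
  have sidx: "idx (ls!s) = idx l" using lst FFL Lne s_def by (simp add: last_map)
  have spos: "is_pos (ls!s)" using fx[rule_format, OF sn ps] scl l by auto
  have lls: "l = linv (ls!s)"
    by (rule eq_by_parts) (use scl l sidx spos pos_linv in auto)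
  have sorted: "sorted L" unfolding L_def using sorted_wrt_filter sorted_upt by blast
  have maxL: "\<And>x. x \<in> set L \<Longrightarrow> x \<le> s" using sorted_le_last[OF sorted] s_def by blast
  have dL: "distinct L" unfolding L_def by simp
  define p' where "p' = (\<lambda>i. if i = s then ?n else if i = ?n then s else p i)"
  have sneq: "s \<noteq> ?n" using sn by simp
  have p's: "p' s = ?n" and p'n: "p' ?n = s" using sneq by (auto simp: p'_def)
  have p'o: "\<And>i. i \<noteq> s \<Longrightarrow> i \<noteq> ?n \<Longrightarrow> p' i = p i" by (auto simp: p'_def)
  have pns: "p i \<noteq> s \<and> p i < ?n" if "i < ?n" "i \<noteq> s" for i
  proof -
    have "p i < ?n" "p (p i) = i" using rng that(1) by auto
    then show ?thesis using ps that(2) by auto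
  qed
  have nth1: "\<And>i. i < ?n \<Longrightarrow> (ls@[l])!i = ls!i" by (simp add: nth_append)
  have nth2: "(ls@[l])!?n = l" by simp
  have p'rng: "\<And>i. i < Suc ?n \<Longrightarrow> p' i < Suc ?n"
  proof -
    fix i assume i: "i < Suc ?n"
    show "p' i < Suc ?n"
    proof (cases "i = s \<or> i = ?n")
      case True then show ?thesis using p's p'n sn by auto
    next
      case False
      then have "i < ?n" using i by auto
      then show ?thesis using False p'o rng by auto
    qed
  qed
  have b0: "p' i = i" if i: "Suc ?n \<le> i" for i
  proof -
    have "i \<noteq> s" "i \<noteq> ?n" using sn i by auto
    then have "p' i = p i" using p'o by blast
    also have "p i = i" using out i by simp
    finally show ?thesis .
  qed
  have b2: "p' (p' i) = i" if i: "i < Suc ?n" for i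
  proof (cases "i = s \<or> i = ?n")
    case True then show ?thesis using p's p'n by auto
  next
    case False
    then have ilt: "i < ?n" and is0: "i \<noteq> s" and "i \<noteq> ?n" using i by auto
    have pi: "p' i = p i" using is0 \<open>i \<noteq> ?n\<close> p'o by blast
    have h: "p i \<noteq> s \<and> p i < ?n" using pns[OF ilt is0] .
    have "p' (p i) = p (p i)" using h p'o by (metis less_irrefl)
    also have "p (p i) = i" using rng ilt by blast
    finally show ?thesis using pi by simp
  qed
  have b3: "(ls@[l])!i = Eps \<or> is_pos ((ls@[l])!i)" if i: "i < Suc ?n" "p' i = i" for i
  proof -
    have "i \<noteq> s" "i \<noteq> ?n" using i(2) p's p'n sneq by auto
    then have ilt: "i < ?n" and pi: "p i = i" using i p'o by auto
    have "ls!i = Eps \<or> is_pos (ls!i)" using fx ilt pi by blast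
    then show ?thesis using nth1[OF ilt] by simp
  qed
  have b4: "is_pos ((ls@[l])!i) \<and> (ls@[l])!(p' i) = linv ((ls@[l])!i)" if i: "i < Suc ?n" "i < p' i" for i
  proof (cases "i = s")
    case True
    have e1: "(ls@[l])!i = ls!s" using True nth1[OF sn] by simp
    have e2: "(ls@[l])!(p' i) = l" using True p's nth2 by simp
    show ?thesis unfolding e1 e2 using spos lls by blast
  next
    case False
    have "i \<noteq> ?n" using i(2) p'n sn by auto
    then have ilt: "i < ?n" using i(1) by simp
    have pi: "p' i = p i" using False \<open>i \<noteq> ?n\<close> p'o by blast
    have pil: "p i < ?n" using pns[OF ilt False] by blast
    have "i < p i" using i(2) pi by simp
    then have u: "is_pos (ls!i) \<and> ls!(p i) = linv (ls!i)" using up ilt by blast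
    show ?thesis unfolding pi nth1[OF ilt] nth1[OF pil] using u .
  qed
  have b5: "\<not> p' i < p' j" if a: "i < Suc ?n" "j < Suc ?n" "cls ((ls@[l])!i) = cls ((ls@[l])!j)"
      "cls ((ls@[l])!i) \<noteq> 0" "i < j" "j < p' i" for i j
  proof
    assume b: "p' i < p' j"
    have ri: "p' i < Suc ?n" using p'rng a(1) .
    have jn: "j \<noteq> ?n" using a(6) ri by auto
    have j: "j < ?n" using jn a(2) by simp
    have rj: "p' j < Suc ?n" using p'rng a(2) .
    have "i \<noteq> ?n" using a(5) j by simp
    then have i: "i < ?n" using a(1) by simp
    have "i \<noteq> s"
    proof
      assume "i = s"
      then have "p' i = ?n" using p's by simp
      then show False using b rj by simp
    qed
    have pi: "p' i = p i" using \<open>i \<noteq> s\<close> \<open>i \<noteq> ?n\<close> p'o by blast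
    have cl: "cls (ls!i) = cls (ls!j)" "cls (ls!i) \<noteq> 0" using a(3,4) nth1[OF i] nth1[OF j] by simp_all
    show False
    proof (cases "j = s")
      case True
      have "s < p i" using a(6) pi True by simp
      then have "p s \<noteq> s" using ns i sn cl a(5) True by blast
      then show False using ps by simp
    next
      case False
      have pj: "p' j = p j" using False jn p'o by blast
      have "j < p i" "p i < p j" using a(6) b pi pj by simp_all
      then show False using cr i j cl a(5) by blast
    qed
  qed
  have b6: "p' t \<noteq> t" if a: "i < Suc ?n" "t < Suc ?n" "cls ((ls@[l])!i) = cls ((ls@[l])!t)"
      "cls ((ls@[l])!i) \<noteq> 0" "i < t" "t < p' i" for i t
  proof
    assume pt: "p' t = t"
    have ts: "t \<noteq> s" "t \<noteq> ?n" using pt p's p'n sneq by auto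
    then have t: "t < ?n" using a(2) by simp
    have i: "i < ?n" using a(5) t by simp
    have "i \<noteq> ?n" using i by simp
    have ptt: "p t = t" using pt p'o ts by simp
    have cl: "cls (ls!i) = cls (ls!t)" "cls (ls!i) \<noteq> 0" using a(3,4) nth1[OF i] nth1[OF t] by simp_all
    show False
    proof (cases "i = s")
      case True
      have "cls (ls!t) = cls l" using cl(1) True scl by simp
      then have "t \<in> set L" using t ptt by (simp add: L_def)
      then have "t \<le> s" using maxL by blast
      then show False using a(5) True by simp
    next
      case False
      have "p' i = p i" using False \<open>i \<noteq> ?n\<close> p'o by blast
      then have "t < p i" using a(6) by simp
      then show False using ns i t cl a(5) ptt by blast
    qed
  qed
  have inv0: "Inv0 (ls @ [l]) p'" unfolding Inv0_def length_append_singleton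
  proof (intro conjI allI impI)
    fix i assume "Suc ?n \<le> i" then show "p' i = i" by (rule b0)
  next
    fix i assume "i < Suc ?n" then show "p' i < Suc ?n" by (rule p'rng)
  next
    fix i assume "i < Suc ?n" then show "p' (p' i) = i" by (rule b2)
  next
    fix i assume "i < Suc ?n" "p' i = i" then show "(ls@[l])!i = Eps \<or> is_pos ((ls@[l])!i)" by (rule b3)
  next
    fix i assume "i < Suc ?n" "i < p' i" then show "is_pos ((ls@[l])!i)" using b4 by blast
  next
    fix i assume "i < Suc ?n" "i < p' i" then show "(ls@[l])!(p' i) = linv ((ls@[l])!i)" using b4 by blast
  next
    fix i j assume "i < Suc ?n" "j < Suc ?n" "cls ((ls@[l])!i) = cls ((ls@[l])!j)"
      "cls ((ls@[l])!i) \<noteq> 0" "i < j" "j < p' i"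
    then show "\<not> p' i < p' j" by (rule b5)
  next
    fix i t assume "i < Suc ?n" "t < Suc ?n" "cls ((ls@[l])!i) = cls ((ls@[l])!t)"
      "cls ((ls@[l])!i) \<noteq> 0" "i < t" "t < p' i"
    then show "p' t \<noteq> t" by (rule b6)
  qed
  have FFn: "FF (ls@[l]) p' c = (if c = cls l then butlast (FF ls p c) else FF ls p c)" for c
  proof -
    define Lc where "Lc = filter (\<lambda>x. cls (ls!x) = c \<and> p x = x) [0..<?n]"
    have FFc: "FF ls p c = map (\<lambda>x. idx (ls!x)) Lc" unfolding FF_def Lc_def by simp
    have g1: "filter (\<lambda>x. cls ((ls@[l])!x) = c \<and> p' x = x) [0..<?n]
        = filter (\<lambda>x. cls (ls!x) = c \<and> p x = x \<and> x \<noteq> s) [0..<?n]"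
    proof (rule filter_cong)
      fix x assume "x \<in> set [0..<?n]"
      then have x: "x < ?n" by simp
      show "(cls ((ls@[l])!x) = c \<and> p' x = x) = (cls (ls!x) = c \<and> p x = x \<and> x \<noteq> s)"
      proof (cases "x = s")
        case True then show ?thesis using p's sneq by simp
      next
        case False
        then have "p' x = p x" using p'o x by simp
        then show ?thesis using nth1[OF x] False by simp
      qed
    qed simp
    have g2: "filter (\<lambda>x. cls (ls!x) = c \<and> p x = x \<and> x \<noteq> s) [0..<?n] = filter (\<lambda>x. x \<noteq> s) Lc"
      unfolding Lc_def filter_filter by (rule filter_cong) auto
    have g3: "filter (\<lambda>x. cls ((ls@[l])!x) = c \<and> p' x = x) [?n] = []"
      using p'n sneq by simp
    have f1: "filter (\<lambda>x. cls ((ls@[l])!x) = c \<and> p' x = x) [0..<length (ls@[l])] = filter (\<lambda>x. x \<noteq> s) Lc"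
    proof -
      have "[0..<length (ls@[l])] = [0..<?n] @ [?n]" by simp
      then show ?thesis using g1 g2 g3 by simp
    qed
    have m: "map (\<lambda>x. idx ((ls@[l])!x)) (filter (\<lambda>x. x \<noteq> s) Lc) = map (\<lambda>x. idx (ls!x)) (filter (\<lambda>x. x \<noteq> s) Lc)"
      by (rule map_cong) (auto simp: Lc_def nth_append)
    have FF1: "FF (ls@[l]) p' c = map (\<lambda>x. idx (ls!x)) (filter (\<lambda>x. x \<noteq> s) Lc)"
      unfolding FF_def f1 m ..
    show ?thesis
    proof (cases "c = cls l")
      case True
      then have LL: "Lc = L" unfolding Lc_def L_def by simp
      have e: "butlast L @ [s] = L" using Lne s_def by simp
      have "distinct (butlast L @ [s])" using dL e by simp
      then have ns': "s \<notin> set (butlast L)" by simp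
      have "filter (\<lambda>x. x \<noteq> s) (butlast L) = butlast L" using ns' by (auto intro!: filter_True)
      then have "filter (\<lambda>x. x \<noteq> s) (butlast L @ [s]) = butlast L" by simp
      then have fL: "filter (\<lambda>x. x \<noteq> s) L = butlast L" unfolding e .
      show ?thesis unfolding FF1 FFc LL fL using True by (simp add: map_butlast)
    next
      case False
      have "filter (\<lambda>x. x \<noteq> s) Lc = Lc"
      proof (rule filter_True, rule ballI)
        fix x assume "x \<in> set Lc"
        then have "cls (ls!x) = c" by (simp add: Lc_def)
        then show "x \<noteq> s" using scl False by auto
      qed
      then show ?thesis unfolding FF1 FFc using False by simp
    qed
  qed
  show ?thesis using inv0 FFn by blast
qed


lemma Inv_exists:
  "foldl stack_step (Some ([],[])) ls = Some w \<Longrightarrow> \<exists>p. Inv0 ls p \<and> w = (FF ls p 1, FF ls p 2)"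
proof (induction ls arbitrary: w rule: rev_induct)
  case Nil
  have "Inv0 [] (\<lambda>i. i)" unfolding Inv0_def by simp
  moreover have "FF [] (\<lambda>i. i) c = []" for c unfolding FF_def by simp
  ultimately show ?case using Nil by auto
next
  case (snoc x xs)
  show ?case
  proof (cases "foldl stack_step (Some ([],[])) xs")
    case None
    then show ?thesis using snoc.prems by (simp add: stack_step.simps(1))
  next
    case (Some w0)
    obtain p where I: "Inv0 xs p" and w0: "w0 = (FF xs p 1, FF xs p 2)" using snoc.IH[OF Some] by blast
    define g where "g = FF xs p"
    have st: "stack_step (Some (g 1, g 2)) x = Some w" using snoc.prems Some w0 g_def by simp
    have out: "\<forall>i. length xs \<le> i \<longrightarrow> p i = i" using I unfolding Inv0_def by blast
    show ?thesis
    proof (cases "cls x = 0")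
      case True
      have "w = (g 1, g 2)" using st True unfolding step_gen by simp
      moreover have "FF (xs@[x]) p c = g c" if "c \<noteq> 0" for c using FF_snoc[OF out] True that g_def by simp
      moreover have "Inv0 (xs@[x]) p" using Inv0_snoc_open[OF I] True by blast
      ultimately have "Inv0 (xs@[x]) p \<and> w = (FF (xs@[x]) p 1, FF (xs@[x]) p 2)"
        by (metis one_neq_zero zero_neq_numeral)
      then show ?thesis by blast
    next
      case nz: False
      show ?thesis
      proof (cases "is_pos x")
        case True
        have "w = ((g(cls x := g (cls x) @ [idx x])) 1, (g(cls x := g (cls x) @ [idx x])) 2)"
          using st True nz unfolding step_gen by simp
        moreover have "FF (xs@[x]) p c = (g(cls x := g (cls x) @ [idx x])) c" for c
          using FF_snoc[OF out] g_def by simp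
        moreover have "Inv0 (xs@[x]) p" using Inv0_snoc_open[OF I] True by blast
        ultimately have "Inv0 (xs@[x]) p \<and> w = (FF (xs@[x]) p 1, FF (xs@[x]) p 2)" by simp
        then show ?thesis by blast
      next
        case False
        have c: "g (cls x) \<noteq> [] \<and> last (g (cls x)) = idx x"
          using st False nz unfolding step_gen by (auto split: if_splits)
        have w: "w = ((g(cls x := butlast (g (cls x)))) 1, (g(cls x := butlast (g (cls x)))) 2)"
          using st False nz c unfolding step_gen by simp
        obtain p' where I': "Inv0 (xs @ [x]) p'"
          and F': "\<forall>c. FF (xs@[x]) p' c = (if c = cls x then butlast (FF xs p c) else FF xs p c)"
          using Inv0_snoc_close[OF I nz False] c g_def by blast
        have "FF (xs@[x]) p' c = (g(cls x := butlast (g (cls x)))) c" for c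
          using F' g_def by simp
        then have "Inv0 (xs@[x]) p' \<and> w = (FF (xs@[x]) p' 1, FF (xs@[x]) p' 2)" using I' w by simp
        then show ?thesis by blast
      qed
    qed
  qed
qed

lemma Inv_G: assumes I: "Inv0 ls p" and e: "FF ls p 1 = []" "FF ls p 2 = []" shows "G ls p"
proof -
  let ?n = "length ls"
  note D = I[unfolded Inv0_def]
  have out: "\<forall>i. ?n \<le> i \<longrightarrow> p i = i" using D by blast
  have rng: "\<forall>i<?n. p i < ?n \<and> p (p i) = i" using D by blast
  have up: "\<forall>i<?n. i < p i \<longrightarrow> is_pos (ls!i) \<and> ls!(p i) = linv (ls!i)" using D by blast
  have cr: "\<forall>i j. i < ?n \<longrightarrow> j < ?n \<longrightarrow> cls (ls!i) = cls (ls!j) \<longrightarrow> cls (ls!i) \<noteq> 0 \<longrightarrow>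
        i < j \<longrightarrow> j < p i \<longrightarrow> \<not> p i < p j" using D by blast
  have perm: "p permutes {..<?n}"
    by (rule inv_permutes) (use out rng in auto)
  have fx: "ls!i = Eps" if "i < ?n" "p i = i" for i
  proof (rule ccontr)
    assume "ls!i \<noteq> Eps"
    then have nz: "cls (ls!i) \<noteq> 0" using cls0 by simp
    have "i \<in> set (filter (\<lambda>s. cls (ls!s) = cls (ls!i) \<and> p s = s) [0..<?n])" using that by simp
    then have "filter (\<lambda>s. cls (ls!s) = cls (ls!i) \<and> p s = s) [0..<?n] \<noteq> []"
      by (metis empty_iff list.set(1))
    then have "FF ls p (cls (ls!i)) \<noteq> []" unfolding FF_def by simp
    then show False using e cls_range[OF nz] by auto
  qed
  show ?thesis unfolding G_def Let_def similar_cls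
    using perm rng fx up cr by blast
qed

theorem proposition2p2:
  fixes V :: "'v set" and E :: "('v \<times> 'v) set" and rho :: "'v \<Rightarrow> label"
    and v1 v2 :: 'v and \<gamma> :: "'v list"
  assumes "two_stack_automaton V E rho v1 v2"
    and "is_path V E \<gamma>"
  shows "(balanced rho \<gamma> \<longleftrightarrow> (\<exists>p. good_involution rho \<gamma> p))
         \<and> (balanced rho \<gamma> \<longrightarrow> (\<exists>!p. good_involution rho \<gamma> p))"
proof -
  have eq: "balanced rho \<gamma> \<longleftrightarrow> (\<exists>p. good_involution rho \<gamma> p)"
  proof
    assume "balanced rho \<gamma>"
    then have "foldl stack_step (Some ([],[])) (map rho \<gamma>) = Some ([],[])" unfolding balanced_def .
    then obtain p where I: "Inv0 (map rho \<gamma>) p" and w: "([],[]) = (FF (map rho \<gamma>) p 1, FF (map rho \<gamma>) p 2)"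
      using Inv_exists by blast
    have "G (map rho \<gamma>) p" using Inv_G[OF I] w by simp
    then show "\<exists>p. good_involution rho \<gamma> p" using good_G by blast
  next
    assume "\<exists>p. good_involution rho \<gamma> p"
    then obtain p where "G (map rho \<gamma>) p" using good_G by blast
    then show "balanced rho \<gamma>" unfolding balanced_def using G_balanced by blast
  qed
  have "\<exists>!p. good_involution rho \<gamma> p" if bal: "balanced rho \<gamma>"
  proof -
    obtain p where "good_involution rho \<gamma> p" using eq bal by blast
    moreover have "q = p" if "good_involution rho \<gamma> q" "good_involution rho \<gamma> p" for q p
      using G_unique that good_G by blast
    ultimately show ?thesis by blast
  qed
  then show ?thesis using eq by blast
qed

end
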